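(* Let $n$ be a positive integer and let $i,k\in\{1,\ldots,n\}$. Suppose that $H\sim\text{Hyp}(n,i,k)$ satisfies $\mathbb{E}(H)\in [1,\min\{i,k\}-2]$ and $\frac{(n-i)(n-k)}{n}> 1$. Then \[ \mathbb{P}(H\ge \mathbb{E}(H)) \,\ge\,\frac{e^{-1/8}}{4\sqrt{2}} \cdot \sqrt{\frac{n-1}{n}} \cdot\frac{ \sqrt{\text{Var}(H)} }{1 + \sqrt{1+ \frac{n-1}{n-k}\cdot\text{Var}(H)}}. \]
   Context: $\text{Hyp}(n,i,k)$ denotes the hypergeometric distribution: the number of black marbles in a sample without replacement of size $k$ from an urn with $i$ black and $n-i$ white marbles, i.e. $\mathbb{P}(H=j)=\binom{i}{j}\binom{n-i}{k-j}/\binom{n}{k}$ for $j\in\{\max\{0,k-(n-i)\},\ldots,\min\{k,i\}\}$. One has $\mathbb{E}(H)=ik/n$ and $\text{Var}(H)=k\cdot\frac{i}{n}\cdot\frac{n-i}{n}\cdot\frac{n-k}{n-1}$. *)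

theory Defs
  imports "HOL-Analysis.Analysis"
begin

text \<open>Hypergeometric distribution Hyp(n,i,k): probability that H = j, for j in 0..k
  (binomial coefficients vanish outside the support).\<close>
definition hyp_pmf :: "nat \<Rightarrow> nat \<Rightarrow> nat \<Rightarrow> nat \<Rightarrow> real" where
  "hyp_pmf n i k j =
     (if j \<le> k then real (i choose j) * real ((n - i) choose (k - j)) / real (n choose k) else 0)"

definition hyp_prob :: "nat \<Rightarrow> nat \<Rightarrow> nat \<Rightarrow> (nat \<Rightarrow> bool) \<Rightarrow> real" where
  "hyp_prob n i k P = (\<Sum>j\<in>{j. j \<le> k \<and> P j}. hyp_pmf n i k j)"

definition hyp_mean :: "nat \<Rightarrow> nat \<Rightarrow> nat \<Rightarrow> real" where
  "hyp_mean n i k = real i * real k / real n"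

definition hyp_var :: "nat \<Rightarrow> nat \<Rightarrow> nat \<Rightarrow> real" where
  "hyp_var n i k = real k * (real i / real n) * ((real n - real i) / real n)
                    * ((real n - real k) / (real n - 1))"

end

theory Submission
  imports Defs
begin

lemma ch_real: "real (Suc j) * real (a choose Suc j) = (real a - real j) * real (a choose j)"
proof (cases "j \<le> a")
  case True
  have "Suc j * (a choose Suc j) = (a - j) * (a choose j)"
    using binomial_absorption[of j a] binomial_absorb_comp[of a j] by simp
  hence "real (Suc j * (a choose Suc j)) = real ((a - j) * (a choose j))" by simp
  thus ?thesis using True by (simp add: of_nat_diff algebra_simps)
next
  case False
  thus ?thesis by (simp add: binomial_eq_0)
qed

lemma poly: fixes s :: real assumes s: "s \<ge> 1/2"
  shows "(7/2* s+1)^2 * (s^2 + 6/5) \<le> 72/5 * s^2 * (s^2 + 2* s + 2)"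
proof -
  have e: "72/5 * s^2 * (s^2 + 2* s + 2) - (7/2* s+1)^2 * (s^2 + 6/5)
     = 43/20 * s^4 + 109/5 * s^3 + 131/10 * s^2 - 42/5 * s - 6/5"
    by algebra
  have h2: "s^2 \<ge> s/2" using s by (simp add: power2_eq_square)
  have h3: "s^3 \<ge> s/4"
  proof -
    have "(1/2)^2 \<le> s^2" using s by (intro power_mono) auto
    hence "s^2 \<ge> 1/4" by (simp add: power2_eq_square)
    hence "s * s^2 \<ge> s * (1/4)" using s by (intro mult_left_mono) auto
    thus ?thesis by (simp add: power3_eq_cube power2_eq_square)
  qed
  have h4: "s^4 \<ge> 0" by simp
  show ?thesis using e h2 h3 h4 s by linarith
qed

locale hyp =
  fixes n i k :: nat
  assumes n1: "n \<ge> 1" and i1: "1 \<le> i" and i_n: "i \<le> n" and k1: "1 \<le> k" and k_n: "k \<le> n"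
    and m1: "1 \<le> hyp_mean n i k"
    and m2: "hyp_mean n i k \<le> real (min i k) - 2"
    and q1: "(real n - real i) * (real n - real k) / real n > 1"
begin

abbreviation p where "p j \<equiv> hyp_pmf n i k j"


lemma p_nonneg: "p j \<ge> 0" by (simp add: hyp_pmf_def)

lemma p_zero: "j > k \<Longrightarrow> p j = 0" by (simp add: hyp_pmf_def)
lemma p_zero_i: "j > i \<Longrightarrow> p j = 0" by (simp add: hyp_pmf_def)

lemma prec: "real (Suc j) * (real n - real i - real k + real j + 1) * p (Suc j)
      = (real i - real j) * (real k - real j) * p j"
proof (cases "j < k")
  case True
  define b where "b = k - Suc j"
  have kj: "k - j = Suc b" using True b_def by simp
  have ab: "real n - real i - real k + real j + 1 = real (n - i) - real b"
    using True b_def i_n by (simp add: of_nat_diff)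
  note e1 = ch_real[of j i]
  note e2 = ch_real[of b "n - i"]
  have kk: "real k - real j = real (Suc b)" using kj True by (simp add: of_nat_diff[symmetric])
  have "real (Suc j) * (real n - real i - real k + real j + 1) * p (Suc j)
     = (real (Suc j) * real (i choose Suc j)) * ((real (n-i) - real b) * real ((n-i) choose b)) / real (n choose k)"
    using True unfolding hyp_pmf_def ab b_def by simp
  also have "\<dots> = ((real i - real j) * real (i choose j)) * (real (Suc b) * real ((n - i) choose Suc b)) / real (n choose k)"
    using e1 e2 by simp
  also have "\<dots> = (real i - real j) * (real k - real j) * p j"
    using True unfolding hyp_pmf_def kk kj[symmetric] by simp
  finally show ?thesis .
next
  case False
  then show ?thesis
    by (cases "j = k") (auto simp: hyp_pmf_def)
qed


definition mu where "mu = hyp_mean n i k"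
definition bt :: "real \<Rightarrow> real" where "bt x = x * (real n - real i - real k + x) / real n"
definition al :: "real \<Rightarrow> real" where "al x = (real i - x) * (real k - x) / real n"

lemma npos: "real n > 0" using n1 by simp

lemma mu_eq: "mu = real i * real k / real n" by (simp add: mu_def hyp_mean_def)

lemma bt_al: "bt x - al x = x - mu"
  using npos by (simp add: bt_def al_def mu_eq field_simps)

lemma rec2: "bt (real j + 1) * p (Suc j) = al (real j) * p j"
proof -
  have "bt (real j + 1) * p (Suc j) = (real (Suc j) * (real n - real i - real k + real j + 1) * p (Suc j)) / real n"
    by (simp add: bt_def algebra_simps)
  also have "\<dots> = ((real i - real j) * (real k - real j) * p j) / real n" using prec[of j] by simp
  also have "\<dots> = al (real j) * p j" by (simp add: al_def)
  finally show ?thesis .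
qed

lemma sum_p: "(\<Sum>j\<le>k. p j) = 1"
proof -
  have "(\<Sum>j\<le>k. p j) = (\<Sum>j\<le>k. real (i choose j) * real ((n-i) choose (k - j))) / real (n choose k)"
    by (simp add: hyp_pmf_def sum_divide_distrib)
  also have "(\<Sum>j\<le>k. real (i choose j) * real ((n-i) choose (k - j))) = real (n choose k)"
  proof -
    have "(\<Sum>j\<le>k. (i choose j) * ((n-i) choose (k - j))) = (i + (n - i)) choose k"
      by (rule vandermonde)
    also have "i + (n - i) = n" using i_n by simp
    finally show ?thesis by (metis (no_types, lifting) of_nat_mult of_nat_sum sum.cong)
  qed
  also have "real (n choose k) / real (n choose k) = 1" using k_n by simp
  finally show ?thesis .
qed

lemma mu_ge1: "mu \<ge> 1" using m1 by (simp add: mu_def)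
lemma mu_le_i: "mu \<le> real i - 2" using m2 by (simp add: mu_def)
lemma mu_le_k: "mu \<le> real k - 2" using m2 by (simp add: mu_def)
lemma Qn: "(real n - real i) * (real n - real k) > real n"
  using q1 npos by (simp add: field_simps)
lemma ni2: "real n - real i \<ge> 2"
proof (rule ccontr)
  assume "\<not> ?thesis"
  hence "real n - real i < 2" by simp
  hence "n - i < 2" using i_n by linarith
  hence le1: "real n - real i \<le> 1" using i_n by linarith
  have "real n - real k \<le> real n - 1" using k1 by simp
  have "(real n - real i) * (real n - real k) \<le> 1 * (real n - 1)"
    apply (rule mult_mono) using le1 k1 k_n by auto
  thus False using Qn by simp
qed
lemma nk2: "real n - real k \<ge> 2"
proof (rule ccontr)
  assume "\<not> ?thesis"
  hence "real n - real k < 2" by simp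
  hence "n - k < 2" using k_n by linarith
  hence le1: "real n - real k \<le> 1" using k_n by linarith
  have "(real n - real i) * (real n - real k) \<le> (real n - 1) * 1"
    apply (rule mult_mono) using le1 i1 i_n k_n by auto
  thus False using Qn by simp
qed
lemma i3: "real i \<ge> 3" using mu_ge1 mu_le_i by simp
lemma k3: "real k \<ge> 3" using mu_ge1 mu_le_k by simp
lemma n5: "real n \<ge> 5" using ni2 i3 by simp

lemma key_id: "real n - real i - real k + mu = (real n - real i) * (real n - real k) / real n"
  using npos by (simp add: mu_eq field_simps)
lemma c_pos: "real n - real i - real k + mu > 1"
  using key_id q1 by simp

lemma stein: "(\<Sum>j\<le>k. (real j - mu) * f j * p j) = (\<Sum>j\<le>k. bt (real j) * (f j - f (j - 1)) * p j)"
proof -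
  obtain k' where kk: "k = Suc k'" using k1 by (cases k) auto
  have A: "(\<Sum>j\<le>k. al (real j) * f j * p j) = (\<Sum>j\<le>k'. bt (real j + 1) * f j * p (Suc j))"
  proof -
    have ins: "{..k} = insert k {..k'}" using kk by auto
    have "(\<Sum>j\<le>k. al (real j) * f j * p j) = (\<Sum>j\<le>k'. al (real j) * f j * p j)"
    proof -
      have kn: "k \<notin> {..k'}" using kk by simp
      show ?thesis unfolding ins using kn by (subst sum.insert) (auto simp: al_def)
    qed
    also have "\<dots> = (\<Sum>j\<le>k'. bt (real j + 1) * f j * p (Suc j))"
      by (rule sum.cong[OF refl]) (metis rec2 mult.commute mult.assoc)
    finally show ?thesis .
  qed
  have B: "(\<Sum>j\<le>k. bt (real j) * f (j - 1) * p j) = (\<Sum>j\<le>k'. bt (real j + 1) * f j * p (Suc j))"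
  proof -
    note B0 = sum.atMost_Suc_shift[of "\<lambda>j. bt (real j) * f (j - 1) * p j" k', unfolded kk[symmetric]]
    have "bt 0 = 0" by (simp add: bt_def)
    thus ?thesis using B0 by (simp add: add.commute)
  qed
  have "(\<Sum>j\<le>k. (real j - mu) * f j * p j) = (\<Sum>j\<le>k. bt (real j) * f j * p j) - (\<Sum>j\<le>k. al (real j) * f j * p j)"
    by (simp add: bt_al[symmetric] sum_subtractf[symmetric] algebra_simps)
  also have "\<dots> = (\<Sum>j\<le>k. bt (real j) * f j * p j) - (\<Sum>j\<le>k. bt (real j) * f (j - 1) * p j)"
    using A B by simp
  also have "\<dots> = (\<Sum>j\<le>k. bt (real j) * (f j - f (j - 1)) * p j)"
    by (simp add: sum_subtractf[symmetric] algebra_simps)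
  finally show ?thesis .
qed

lemma mean0: "(\<Sum>j\<le>k. (real j - mu) * p j) = 0"
  using stein[of "\<lambda>_. 1"] by simp

lemma mean1: "(\<Sum>j\<le>k. real j * p j) = mu"
proof -
  have "(\<Sum>j\<le>k. real j * p j) - mu * (\<Sum>j\<le>k. p j) = 0"
    using mean0 by (simp add: algebra_simps sum_subtractf sum_distrib_left)
  thus ?thesis using sum_p by simp
qed

definition V where "V = (\<Sum>j\<le>k. (real j - mu)^2 * p j)"

lemma var_eq: "V = hyp_var n i k"
proof -
  have s1: "(\<Sum>j\<le>k. (real j - mu) * real j * p j) = (\<Sum>j\<le>k. bt (real j) * p j)"
  proof -
    have "(\<Sum>j\<le>k. (real j - mu) * real j * p j) = (\<Sum>j\<le>k. bt (real j) * (real j - real (j - 1)) * p j)"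
      by (rule stein)
    also have "\<dots> = (\<Sum>j\<le>k. bt (real j) * p j)"
      by (rule sum.cong) (auto simp: bt_def of_nat_diff)
    finally show ?thesis .
  qed
  have E2: "(\<Sum>j\<le>k. (real j)^2 * p j) = V + mu^2"
  proof -
    have "V = (\<Sum>j\<le>k. (real j)^2 * p j) - 2 * mu * (\<Sum>j\<le>k. real j * p j) + mu^2 * (\<Sum>j\<le>k. p j)"
    proof -
      have "V = (\<Sum>j\<le>k. (real j)^2 * p j - 2*mu*(real j * p j) + mu^2 * p j)"
        unfolding V_def by (rule sum.cong) (auto simp: power2_eq_square algebra_simps)
      also have "\<dots> = (\<Sum>j\<le>k. (real j)^2 * p j) - 2 * mu * (\<Sum>j\<le>k. real j * p j) + mu^2 * (\<Sum>j\<le>k. p j)"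
        by (simp add: sum.distrib sum_subtractf sum_distrib_left)
      finally show ?thesis .
    qed
    thus ?thesis using mean1 sum_p by (simp add: power2_eq_square)
  qed
  have "V = (\<Sum>j\<le>k. (real j - mu) * real j * p j) - mu * (\<Sum>j\<le>k. (real j - mu) * p j)"
    unfolding V_def by (simp add: power2_eq_square algebra_simps sum_subtractf sum_distrib_left sum.distrib[symmetric])
  also have "\<dots> = (\<Sum>j\<le>k. bt (real j) * p j)" using s1 mean0 by simp
  also have "\<dots> = ((real n - real i - real k) * (\<Sum>j\<le>k. real j * p j) + (\<Sum>j\<le>k. (real j)^2 * p j)) / real n"
  proof -
    have "(\<Sum>j\<le>k. bt (real j) * p j) = (\<Sum>j\<le>k. ((real n - real i - real k) * (real j * p j) + (real j)^2 * p j) / real n)"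
      by (rule sum.cong[OF refl]) (simp add: bt_def power2_eq_square algebra_simps)
    also have "\<dots> = ((real n - real i - real k) * (\<Sum>j\<le>k. real j * p j) + (\<Sum>j\<le>k. (real j)^2 * p j)) / real n"
      by (simp add: sum_divide_distrib[symmetric] sum.distrib sum_distrib_left)
    finally show ?thesis .
  qed
  also have "\<dots> = ((real n - real i - real k) * mu + V + mu^2) / real n"
    using mean1 E2 by simp
  finally have "V * real n = (real n - real i - real k) * mu + V + mu^2" using npos by (simp add: field_simps)
  hence "V * (real n - 1) = (real n - real i - real k) * mu + mu^2" by (simp add: algebra_simps)
  moreover have "real n - 1 > 0" using n5 by simp
  ultimately have "V = mu * (real n - real i - real k + mu) / (real n - 1)"
    by (simp add: field_simps power2_eq_square)
  also have "\<dots> = mu * ((real n - real i) * (real n - real k) / real n) / (real n - 1)"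
    using key_id by simp
  also have "\<dots> = hyp_var n i k" unfolding hyp_var_def mu_eq by (simp add: field_simps)
  finally show ?thesis .
qed


definition m where "m = nat \<lceil>mu\<rceil>"

lemma m_real: "real m = of_int \<lceil>mu\<rceil>"
proof -
  have "\<lceil>mu\<rceil> \<ge> 0" using mu_ge1 by linarith
  thus ?thesis by (simp add: m_def)
qed
lemma m_ge: "real m \<ge> mu" using m_real by simp
lemma m_lt: "real m < mu + 1" using m_real ceiling_correct[of mu] by linarith
lemma m_pos: "m \<ge> 1" using m_ge mu_ge1 by simp
lemma m_i: "m + 2 \<le> i" using m_lt mu_le_i by linarith
lemma m_k: "m + 2 \<le> k" using m_lt mu_le_k by linarith
lemma le_m_iff: "mu \<le> real j \<longleftrightarrow> m \<le> j"
proof -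
  have "mu \<le> real j \<longleftrightarrow> \<lceil>mu\<rceil> \<le> int j" by (simp add: ceiling_le_iff)
  also have "\<dots> \<longleftrightarrow> m \<le> j" unfolding m_def by (simp add: nat_le_iff)
  finally show ?thesis .
qed

lemma prob_eq: "hyp_prob n i k (\<lambda>j. real j \<ge> hyp_mean n i k) = (\<Sum>j\<in>{m..k}. p j)"
proof -
  have e: "\<And>j. hyp_mean n i k \<le> real j \<longleftrightarrow> m \<le> j" using le_m_iff unfolding mu_def by blast
  have "{j. j \<le> k \<and> hyp_mean n i k \<le> real j} = {m..k}"
    unfolding e by auto
  thus ?thesis unfolding hyp_prob_def by simp
qed

lemma bt_pos: "x \<ge> mu \<Longrightarrow> bt x > 0"
proof -
  assume x: "x \<ge> mu"
  have "real n - real i - real k + x > 0" using c_pos x by simp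
  moreover have "x > 0" using x mu_ge1 by simp
  ultimately show ?thesis unfolding bt_def using npos by simp
qed

definition tau where "tau = bt mu"
lemma al_mu: "al mu = tau" unfolding tau_def using bt_al[of mu] by simp
lemma tau_pos: "tau > 0" unfolding tau_def using bt_pos by simp

lemma Dlem: "(\<Sum>j\<in>{m..k}. (real j - mu) * p j) = bt (real m) * p m"
proof -
  define f where "f j = (if m \<le> j then (1::real) else 0)" for j
  have "(\<Sum>j\<le>k. (real j - mu) * f j * p j) = (\<Sum>j\<in>{j\<in>{..k}. m \<le> j}. (real j - mu) * p j)"
  proof -
    have "(\<Sum>j\<le>k. (real j - mu) * f j * p j) = (\<Sum>j\<le>k. if m \<le> j then (real j - mu) * p j else 0)"
      by (rule sum.cong[OF refl]) (simp add: f_def)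
    also have "\<dots> = (\<Sum>j\<in>{j\<in>{..k}. m \<le> j}. (real j - mu) * p j)"
      by (rule sum.inter_filter[symmetric]) simp
    finally show ?thesis .
  qed
  also have "{j\<in>{..k}. m \<le> j} = {m..k}" by auto
  finally have L: "(\<Sum>j\<le>k. (real j - mu) * f j * p j) = (\<Sum>j\<in>{m..k}. (real j - mu) * p j)" .
  have "(\<Sum>j\<le>k. bt (real j) * (f j - f (j - 1)) * p j) = (\<Sum>j\<le>k. if j = m then bt (real j) * p j else 0)"
  proof (rule sum.cong[OF refl])
    fix j assume "j \<in> {..k}"
    show "bt (real j) * (f j - f (j - 1)) * p j = (if j = m then bt (real j) * p j else 0)"
      using m_pos by (cases "j = 0") (auto simp: f_def)
  qed
  also have "\<dots> = bt (real m) * p m" using m_k by (simp add: sum.delta)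
  finally show ?thesis using L stein[of f] by simp
qed

lemma D2: "bt (real m) * p m = al (real m - 1) * p (m - 1)"
proof -
  have "bt (real (m - 1) + 1) * p (Suc (m - 1)) = al (real (m - 1)) * p (m - 1)" by (rule rec2)
  thus ?thesis using m_pos by (simp add: of_nat_diff)
qed


definition r where "r j = (if j < min i k then al (real j) / bt (real j + 1) else 0)"

lemma bt_j1: "m \<le> j \<Longrightarrow> bt (real j + 1) > 0"
  using bt_pos m_ge by simp

lemma al_pos: "j < min i k \<Longrightarrow> al (real j) > 0"
  using npos unfolding al_def by simp

lemma r_nonneg: "m \<le> j \<Longrightarrow> r j \<ge> 0"
  using bt_j1 al_pos unfolding r_def by (simp add: less_imp_le)

lemma p_step: "m \<le> j \<Longrightarrow> p (Suc j) = r j * p j"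
proof (cases "j < min i k")
  case True
  assume mj: "m \<le> j"
  have "bt (real j + 1) * p (Suc j) = al (real j) * p j" by (rule rec2)
  thus ?thesis using True bt_j1[OF mj] unfolding r_def by (simp add: field_simps)
next
  case False
  hence "Suc j > i \<or> Suc j > k" by auto
  thus ?thesis using False p_zero p_zero_i unfolding r_def by auto
qed

lemma bt_mono: "mu \<le> x \<Longrightarrow> x \<le> y \<Longrightarrow> bt x \<le> bt y"
proof -
  assume a: "mu \<le> x" "x \<le> y"
  have "x * (real n - real i - real k + x) \<le> y * (real n - real i - real k + y)"
    apply (rule mult_mono) using a c_pos mu_ge1 by auto
  thus ?thesis unfolding bt_def using npos by (simp add: divide_right_mono)
qed

lemma al_mono: "x \<le> y \<Longrightarrow> y \<le> real (min i k) \<Longrightarrow> al y \<le> al x"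
proof -
  assume a: "x \<le> y" "y \<le> real (min i k)"
  have "(real i - y) * (real k - y) \<le> (real i - x) * (real k - x)"
    apply (rule mult_mono) using a by auto
  thus ?thesis unfolding al_def using npos by (simp add: divide_right_mono)
qed

lemma r_mono: "m \<le> j \<Longrightarrow> j \<le> j' \<Longrightarrow> r j' \<le> r j"
proof (cases "j' < min i k")
  case True
  assume a: "m \<le> j" "j \<le> j'"
  have jm: "j < min i k" using True a by simp
  have "al (real j') / bt (real j' + 1) \<le> al (real j) / bt (real j + 1)"
  proof (rule frac_le)
    show "0 \<le> al (real j)" using al_pos[OF jm] by simp
    show "al (real j') \<le> al (real j)" using al_mono[of "real j" "real j'"] a True by simp
    show "0 < bt (real j + 1)" using bt_j1 a by simp
    show "bt (real j + 1) \<le> bt (real j' + 1)" using bt_mono[of "real j + 1" "real j' + 1"] a m_ge by simp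
  qed
  thus ?thesis using True jm unfolding r_def by simp
next
  case False
  assume a: "m \<le> j" "j \<le> j'"
  have "r j' = 0" using False unfolding r_def by auto
  thus ?thesis using r_nonneg[of j] a by simp
qed

lemma logc: "p m * p (m + s + t) \<le> p (m + s) * p (m + t)"
proof (induction s)
  case 0
  then show ?case by simp
next
  case (Suc s)
  have "p m * p (m + Suc s + t) = r (m + s + t) * (p m * p (m + s + t))"
    using p_step[of "m + s + t"] by simp
  also have "\<dots> \<le> r (m + s + t) * (p (m + s) * p (m + t))"
    using Suc.IH r_nonneg[of "m + s + t"] by (simp add: mult_left_mono)
  also have "\<dots> \<le> r (m + s) * (p (m + s) * p (m + t))"
    apply (rule mult_right_mono) using r_mono[of "m + s" "m + s + t"] p_nonneg by auto
  also have "\<dots> = p (m + Suc s) * p (m + t)" using p_step[of "m + s"] by simp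
  finally show ?case .
qed


lemma shift_sum: "(\<Sum>j\<in>{m..k}. g j) = (\<Sum>u\<le>k - m. g (m + u))"
proof -
  have "(\<Sum>j\<in>{m..k}. g j) = (\<Sum>u\<in>{0..k - m}. g (m + u))"
    using sum.atLeastAtMost_shift_0[of m k g] m_k by (simp add: comp_def)
  thus ?thesis by (simp add: atMost_atLeast0)
qed

lemma tail: "p m * (\<Sum>j\<in>{m..k}. (real j - real m + 1) * p j) \<le> (\<Sum>j\<in>{m..k}. p j)^2"
proof -
  define L where "L = k - m"
  define T where "T = {(s,t). s + t \<le> L}"
  have finT: "finite T"
    by (rule finite_subset[of _ "{..L} \<times> {..L}"]) (auto simp: T_def)
  have tri: "(\<Sum>(s,t)\<in>T. p m * p (m + s + t)) = (\<Sum>u\<le>L. p m * ((real u + 1) * p (m + u)))"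
  proof -
    have "(\<Sum>(s,t)\<in>T. p m * p (m + s + t)) = (\<Sum>u\<le>L. \<Sum>s\<le>u. p m * p (m + s + (u - s)))"
      unfolding T_def by (rule sum.triangle_reindex_eq)
    also have "\<dots> = (\<Sum>u\<le>L. p m * ((real u + 1) * p (m + u)))"
    proof (rule sum.cong[OF refl])
      fix u
      have "(\<Sum>s\<le>u. p m * p (m + s + (u - s))) = (\<Sum>s\<le>u. p m * p (m + u))"
        by (rule sum.cong[OF refl]) auto
      thus "(\<Sum>s\<le>u. p m * p (m + s + (u - s))) = p m * ((real u + 1) * p (m + u))" by simp
    qed
    finally show ?thesis .
  qed
  have le1: "(\<Sum>(s,t)\<in>T. p m * p (m + s + t)) \<le> (\<Sum>(s,t)\<in>T. p (m + s) * p (m + t))"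
    by (rule sum_mono) (auto simp: logc)
  have le2: "(\<Sum>(s,t)\<in>T. p (m + s) * p (m + t)) \<le> (\<Sum>(s,t)\<in>{..L} \<times> {..L}. p (m + s) * p (m + t))"
    by (rule sum_mono2) (auto simp: T_def p_nonneg)
  have pr: "(\<Sum>(s,t)\<in>{..L} \<times> {..L}. p (m + s) * p (m + t)) = (\<Sum>u\<le>L. p (m + u))^2"
    by (simp add: power2_eq_square sum_product sum.cartesian_product)
  have "p m * (\<Sum>j\<in>{m..k}. (real j - real m + 1) * p j) = (\<Sum>u\<le>L. p m * ((real u + 1) * p (m + u)))"
    unfolding shift_sum L_def by (simp add: sum_distrib_left)
  also have "\<dots> \<le> (\<Sum>u\<le>L. p (m + u))^2" using tri le1 le2 pr by linarith
  also have "\<dots> = (\<Sum>j\<in>{m..k}. p j)^2" unfolding shift_sum L_def ..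
  finally show ?thesis .
qed

definition P where "P = (\<Sum>j\<in>{m..k}. p j)"

lemma P_nonneg: "P \<ge> 0" unfolding P_def by (simp add: sum_nonneg p_nonneg)

lemma PD: "p m * (bt (real m) * p m) \<le> P^2"
proof -
  have "(\<Sum>j\<in>{m..k}. (real j - real m + 1) * p j) = (\<Sum>j\<in>{m..k}. (real j - mu) * p j) + (1 - (real m - mu)) * P"
    unfolding P_def by (simp add: sum_distrib_left sum.distrib[symmetric] algebra_simps)
  also have "\<dots> \<ge> (\<Sum>j\<in>{m..k}. (real j - mu) * p j)"
    using m_lt P_nonneg by simp
  finally have "bt (real m) * p m \<le> (\<Sum>j\<in>{m..k}. (real j - real m + 1) * p j)" using Dlem by simp
  hence "p m * (bt (real m) * p m) \<le> p m * (\<Sum>j\<in>{m..k}. (real j - real m + 1) * p j)"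
    using p_nonneg by (simp add: mult_left_mono)
  thus ?thesis using tail unfolding P_def by linarith
qed


lemma bt_mu1: "bt (mu + 1) = tau + (real n - real i - real k + 2 * mu + 1) / real n"
  unfolding tau_def bt_def using npos by (simp add: field_simps)

lemma delta_le: "(real n - real i - real k + 2 * mu + 1) / real n \<le> 6/5"
proof -
  have "2 * real i * real k \<le> real n * (real i + real k)"
  proof -
    have "real i * real k \<le> real n * real k" using i_n by (simp add: mult_right_mono)
    moreover have "real i * real k \<le> real n * real i" using k_n by (metis mult.commute mult_right_mono of_nat_0_le_iff of_nat_le_iff)
    ultimately show ?thesis by (simp add: algebra_simps)
  qed
  hence "2 * mu \<le> real i + real k" unfolding mu_eq using npos by (simp add: field_simps)
  hence "real n - real i - real k + 2 * mu + 1 \<le> real n + 1" by simp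
  also have "\<dots> \<le> 6/5 * real n" using n5 by simp
  finally show ?thesis using npos by (simp add: field_simps)
qed

lemma r_m_le1: "m \<le> j \<Longrightarrow> r j \<le> 1"
proof -
  assume mj: "m \<le> j"
  have "r m \<le> 1"
  proof (cases "m < min i k")
    case True
    have "al (real m) \<le> al mu" using al_mono[of mu "real m"] m_ge True by simp
    also have "\<dots> = tau" by (rule al_mu)
    also have "\<dots> = bt mu" by (simp add: tau_def)
    also have "\<dots> \<le> bt (real m + 1)" using bt_mono[of mu "real m + 1"] m_ge by simp
    finally have "al (real m) \<le> bt (real m + 1)" .
    thus ?thesis using True bt_j1[of m] unfolding r_def by auto
  next
    case False
    thus ?thesis using m_i m_k by simp
  qed
  thus ?thesis using r_mono[of m j] mj by simp
qed

lemma p_dec: "m \<le> j \<Longrightarrow> p j \<le> p m"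
proof (induction j rule: dec_induct)
  case base
  then show ?case by simp
next
  case (step j)
  have "p (Suc j) = r j * p j" using p_step step by simp
  also have "\<dots> \<le> 1 * p j" using r_m_le1[of j] step p_nonneg[of j] by (intro mult_right_mono) auto
  finally show ?case using step by simp
qed

lemma al_bt_diff: "al x - bt (x + 1) = (mu - x - 1) + (real i + real k - 2 * x - 1) / real n"
  unfolding al_def bt_def mu_eq using npos by (simp add: field_simps)

lemma p_inc1: "j + 2 \<le> m \<Longrightarrow> p j \<le> p (Suc j)"
proof (cases "p j = 0")
  case True
  then show ?thesis using p_nonneg by simp
next
  case False
  assume jm: "j + 2 \<le> m"
  have jk: "j \<le> k" using False p_zero by (meson not_le)
  have "(n - i) choose (k - j) \<noteq> 0" using False jk by (auto simp: hyp_pmf_def)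
  hence "k - j \<le> n - i" by simp
  hence "real k - real j \<le> real n - real i" using jk i_n by linarith
  hence btp: "bt (real j + 1) > 0" unfolding bt_def using npos by simp
  have "real j + 1 < mu" using jm m_lt by linarith
  moreover have "real i + real k - 2 * real j - 1 > 0" using jm m_i m_k by linarith
  ultimately have "al (real j) - bt (real j + 1) \<ge> 0" using al_bt_diff[of "real j"] npos by simp
  hence ab: "bt (real j + 1) \<le> al (real j)" by simp
  have "bt (real j + 1) * p (Suc j) = al (real j) * p j" by (rule rec2)
  also have "\<dots> \<ge> bt (real j + 1) * p j" using ab p_nonneg[of j] by (simp add: mult_right_mono)
  finally show ?thesis using btp by simp
qed

lemma p_inc: "j \<le> m - 1 \<Longrightarrow> p j \<le> p (m - 1)"
proof (induction j rule: inc_induct)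
  case base
  then show ?case by simp
next
  case (step j)
  have "p j \<le> p (Suc j)" using step m_pos by (intro p_inc1) linarith
  thus ?case using step by simp
qed

definition M where "M = max (p (m - 1)) (p m)"

lemma p_le_M: "p j \<le> M"
proof (cases "m \<le> j")
  case True
  thus ?thesis using p_dec unfolding M_def by fastforce
next
  case False
  hence "j \<le> m - 1" by simp
  thus ?thesis using p_inc unfolding M_def by fastforce
qed


lemma V_ge: "V \<ge> 1/4"
proof -
  define x where "x = real i" define y where "y = real k" define N where "N = real n"
  have f1: "x * y \<ge> N" using mu_ge1 npos unfolding mu_eq x_def y_def N_def by (simp add: field_simps)
  have f2: "y * (N - x) \<ge> 2 * N" using mu_le_i mu_le_k npos unfolding mu_eq x_def y_def N_def
    by (simp add: field_simps)
  have f3: "x * (N - y) \<ge> 2 * N" using mu_le_i mu_le_k npos unfolding mu_eq x_def y_def N_def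
    by (simp add: field_simps)
  have f4: "(N - x) * (N - y) \<ge> N" using Qn unfolding x_def y_def N_def by simp
  have xp: "x \<ge> 0" "y \<ge> 0" "N - x \<ge> 0" "N - y \<ge> 0" "N > 0"
    using i_n k_n npos unfolding x_def y_def N_def by auto
  have key: "4 * (x * y * ((N - x) * (N - y))) \<ge> N^3"
  proof (cases "2 * x \<le> N")
    case cx: True
    show ?thesis
    proof (cases "2 * y \<le> N")
      case True
      have "(N - x) * (N - y) \<ge> (N/2) * (N/2)" apply (rule mult_mono) using cx True xp by auto
      note h = this
      have "x * y * ((N - x) * (N - y)) \<ge> N * ((N/2) * (N/2))" using mult_mono[OF f1 h] xp by auto
      thus ?thesis by (simp add: power3_eq_cube field_simps)
    next
      case False
      have "(N - x) * y \<ge> (N/2) * (N/2)" apply (rule mult_mono) using cx False xp by auto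
      note h = this
      have h2: "((N - x) * y) * (x * (N - y)) \<ge> ((N/2) * (N/2)) * (2 * N)" using mult_mono[OF h f3] xp by auto
      have eq: "x * y * ((N - x) * (N - y)) = ((N - x) * y) * (x * (N - y))" by (simp add: algebra_simps)
      have hN: "((N/2) * (N/2)) * (2 * N) = N * N * N / 2" by (simp add: field_simps)
      have "x * y * ((N - x) * (N - y)) \<ge> N * N * N / 2" unfolding eq using h2 hN by linarith
      moreover have "N * N * N > 0" using xp by simp
      ultimately show ?thesis unfolding power3_eq_cube by linarith
    qed
  next
    case cx: False
    show ?thesis
    proof (cases "2 * y \<le> N")
      case True
      have "x * (N - y) \<ge> (N/2) * (N/2)" apply (rule mult_mono) using cx True xp by auto
      note h = this
      have h2: "(x * (N - y)) * (y * (N - x)) \<ge> ((N/2) * (N/2)) * (2 * N)" using mult_mono[OF h f2] xp by auto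
      have eq: "x * y * ((N - x) * (N - y)) = (x * (N - y)) * (y * (N - x))" by (simp add: algebra_simps)
      have hN: "((N/2) * (N/2)) * (2 * N) = N * N * N / 2" by (simp add: field_simps)
      have "x * y * ((N - x) * (N - y)) \<ge> N * N * N / 2" unfolding eq using h2 hN by linarith
      moreover have "N * N * N > 0" using xp by simp
      ultimately show ?thesis unfolding power3_eq_cube by linarith
    next
      case False
      have "x * y \<ge> (N/2) * (N/2)" apply (rule mult_mono) using cx False xp by auto
      note h = this
      have "(x * y) * ((N - x) * (N - y)) \<ge> ((N/2) * (N/2)) * N" using mult_mono[OF h f4] xp by auto
      thus ?thesis by (simp add: power3_eq_cube field_simps)
    qed
  qed
  have "V = x * y * ((N - x) * (N - y)) / (N^2 * (N - 1))"
    unfolding var_eq hyp_var_def x_def y_def N_def by (simp add: field_simps power2_eq_square)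
  moreover have "N - 1 > 0" using n5 unfolding N_def by simp
  ultimately have "V \<ge> (N^3 / 4) / (N^2 * (N - 1))"
  proof -
    assume Veq: "V = x * y * ((N - x) * (N - y)) / (N^2 * (N - 1))" and N1: "N - 1 > 0"
    have "N^3 / 4 \<le> x * y * ((N - x) * (N - y))" using key by simp
    moreover have "N^2 * (N - 1) \<ge> 0" using N1 by simp
    ultimately show ?thesis unfolding Veq by (rule divide_right_mono)
  qed
  also have "(N^3 / 4) / (N^2 * (N - 1)) = N / (4 * (N - 1))"
    using xp \<open>N - 1 > 0\<close> by (simp add: power3_eq_cube power2_eq_square field_simps)
  also have "\<dots> \<ge> 1/4" using \<open>N - 1 > 0\<close> by (simp add: field_simps)
  finally show ?thesis .
qed

lemma cheb: "M * (2 * sqrt (3 * V) + 1) \<ge> 2/3"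
proof -
  define a where "a = sqrt (3 * V)"
  have Vp: "V > 0" using V_ge by simp
  have ap: "a > 0" unfolding a_def using Vp by simp
  have a2: "a^2 = 3 * V" unfolding a_def using Vp by simp
  define W where "W = {j\<in>{..k}. \<bar>real j - mu\<bar> \<le> a}"
  have WA: "W \<subseteq> {..k}" unfolding W_def by auto
  have out: "(\<Sum>j\<in>{..k} - W. p j) \<le> 1/3"
  proof -
    have "(\<Sum>j\<in>{..k} - W. p j) \<le> (\<Sum>j\<in>{..k} - W. (real j - mu)^2 / a^2 * p j)"
    proof (rule sum_mono)
      fix j assume "j \<in> {..k} - W"
      hence "\<bar>real j - mu\<bar> > a" unfolding W_def by auto
      hence "(real j - mu)^2 > a^2" using ap power_strict_mono[of a "\<bar>real j - mu\<bar>" 2] by simp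
      hence "(real j - mu)^2 / a^2 \<ge> 1" using ap by simp
      thus "p j \<le> (real j - mu)^2 / a^2 * p j" using p_nonneg[of j] mult_right_mono[of 1 "(real j - mu)^2 / a^2" "p j"] by simp
    qed
    also have "\<dots> \<le> (\<Sum>j\<le>k. (real j - mu)^2 / a^2 * p j)"
      by (rule sum_mono2) (auto simp: p_nonneg)
    also have "\<dots> = V / a^2" unfolding V_def by (simp add: sum_divide_distrib)
    also have "\<dots> = 1/3" using a2 Vp by simp
    finally show ?thesis .
  qed
  have "(\<Sum>j\<le>k. p j) = (\<Sum>j\<in>{..k} - W. p j) + (\<Sum>j\<in>W. p j)"
    by (rule sum.subset_diff[OF WA]) simp
  hence inW: "(\<Sum>j\<in>W. p j) \<ge> 2/3" using sum_p out by linarith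
  have Wne: "W \<noteq> {}" using inW by auto
  have finW: "finite W" using WA finite_subset by blast
  define j0 where "j0 = Min W"
  define N where "N = nat \<lfloor>2 * a\<rfloor>"
  have sub: "W \<subseteq> {j0..j0 + N}"
  proof
    fix j assume jW: "j \<in> W"
    have j0W: "j0 \<in> W" unfolding j0_def using Min_in finW Wne by blast
    have "j0 \<le> j" unfolding j0_def using finW jW by simp
    moreover have "real j - real j0 \<le> 2 * a" using jW j0W unfolding W_def by auto
    hence "real (j - j0) \<le> 2 * a" using \<open>j0 \<le> j\<close> by (simp add: of_nat_diff)
    hence "int (j - j0) \<le> \<lfloor>2 * a\<rfloor>" by (simp add: le_floor_iff)
    hence "j - j0 \<le> N" unfolding N_def by linarith
    ultimately show "j \<in> {j0..j0 + N}" by simp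
  qed
  have "card W \<le> card {j0..j0 + N}" by (rule card_mono) (simp_all add: sub)
  hence cW: "real (card W) \<le> 2 * a + 1"
  proof -
    assume "card W \<le> card {j0..j0 + N}"
    hence "card W \<le> N + 1" by simp
    moreover have "real N \<le> 2 * a" unfolding N_def using ap by linarith
    ultimately show ?thesis by linarith
  qed
  have "(\<Sum>j\<in>W. p j) \<le> real (card W) * M" by (rule sum_bounded_above) (simp add: p_le_M)
  also have "\<dots> \<le> (2 * a + 1) * M" using cW p_le_M[of 0] p_nonneg[of 0] by (intro mult_right_mono) auto
  finally show ?thesis using inW unfolding a_def by (simp add: mult.commute)
qed


lemma tau_eq: "tau = (real n - 1) / real n * V"
proof -
  have "tau = mu * ((real n - real i) * (real n - real k) / real n) / real n"
    unfolding tau_def bt_def using key_id by simp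
  also have "\<dots> = (real n - 1) / real n * V"
    unfolding var_eq hyp_var_def mu_eq using npos n5 by (simp add: field_simps)
  finally show ?thesis .
qed

lemma PM: "P^2 \<ge> tau^2 * M^2 / (tau + 6/5)"
proof -
  have btm_ge: "bt (real m) \<ge> tau" unfolding tau_def using bt_mono[of mu "real m"] m_ge by simp
  have btm_le: "bt (real m) \<le> tau + 6/5"
  proof -
    have "bt (real m) \<le> bt (mu + 1)" using bt_mono[of "real m" "mu + 1"] m_ge m_lt by simp
    thus ?thesis using bt_mu1 delta_le by linarith
  qed
  have al_ge: "al (real m - 1) \<ge> tau"
  proof -
    have "al mu \<le> al (real m - 1)" apply (rule al_mono) using m_lt mu_le_i mu_le_k by auto
    thus ?thesis using al_mu by simp
  qed
  have tp: "tau > 0" by (rule tau_pos)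
  have frac: "tau^2 / (tau + 6/5) \<le> tau" using tp by (simp add: field_simps power2_eq_square)
  have Mn: "M \<ge> 0" using p_le_M[of 0] p_nonneg[of 0] by simp
  show ?thesis
  proof (cases "p (m - 1) \<le> p m")
    case True
    hence Meq: "M = p m" unfolding M_def by simp
    have "tau^2 * M^2 / (tau + 6/5) = (tau^2 / (tau + 6/5)) * M^2" by simp
    also have "\<dots> \<le> tau * M^2" using frac by (intro mult_right_mono) auto
    also have "\<dots> \<le> bt (real m) * M^2" using btm_ge by (intro mult_right_mono) auto
    also have "\<dots> = p m * (bt (real m) * p m)" unfolding Meq by (simp add: power2_eq_square)
    also have "\<dots> \<le> P^2" by (rule PD)
    finally show ?thesis .
  next
    case False
    hence Meq: "M = p (m - 1)" unfolding M_def by simp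
    have btp: "bt (real m) > 0" using tp btm_ge by simp
    have "p m * (bt (real m) * p m) = (bt (real m) * p m)^2 / bt (real m)"
      using btp by (simp add: power2_eq_square)
    also have "\<dots> = (al (real m - 1) * M)^2 / bt (real m)" unfolding Meq D2 ..
    finally have eq: "p m * (bt (real m) * p m) = (al (real m - 1) * M)^2 / bt (real m)" .
    have "(tau * M)^2 \<le> (al (real m - 1) * M)^2"
      apply (rule power_mono) using al_ge Mn tp by (auto intro: mult_right_mono)
    hence "(tau * M)^2 / (tau + 6/5) \<le> (al (real m - 1) * M)^2 / (tau + 6/5)"
      using tp by (intro divide_right_mono) auto
    also have "\<dots> \<le> (al (real m - 1) * M)^2 / bt (real m)"
      using btp btm_le by (intro divide_left_mono) auto
    also have "\<dots> \<le> P^2" using PD eq by simp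
    finally show ?thesis by (simp add: power_mult_distrib)
  qed
qed

lemma final: "P \<ge> exp (-1/8) / (4 * sqrt 2) * sqrt ((real n - 1) / real n)
        * (sqrt (hyp_var n i k) / (1 + sqrt (1 + (real n - 1) / (real n - real k) * hyp_var n i k)))"
  (is "P \<ge> ?R")
proof -
  define v where "v = V"
  define sg where "sg = sqrt v"
  define s2 where "s2 = (real n - 1) / real n"
  define X where "X = (real n - 1) / (real n - real k) * v"
  define w where "w = sqrt (1 + v)"
  define wX where "wX = sqrt (1 + X)"
  define a where "a = sqrt (3 * V)"
  define E where "E = exp (-1/8::real)"
  have v4: "v \<ge> 1/4" unfolding v_def by (rule V_ge)
  have vp: "v > 0" using v4 by simp
  have sg2: "sg^2 = v" unfolding sg_def using vp by simp
  have sgp: "sg \<ge> 1/2"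
  proof -
    have "sqrt (1/4) \<le> sg" unfolding sg_def using v4 by (rule real_sqrt_le_mono)
    moreover have "sqrt (1/4::real) = 1/2" by (simp add: real_sqrt_divide)
    ultimately show ?thesis by simp
  qed
  have s2lo: "s2 \<ge> 4/5" unfolding s2_def using n5 npos by (simp add: field_simps)
  have s2hi: "s2 \<le> 1" unfolding s2_def using npos by simp
  have tau_s: "tau = s2 * v" unfolding tau_eq s2_def v_def ..
  have Xv: "X \<ge> v"
  proof -
    have "(real n - 1) / (real n - real k) \<ge> 1" using k1 nk2 by (simp add: field_simps)
    thus ?thesis unfolding X_def using vp by (metis mult_le_cancel_right1 less_le_not_le mult.commute)
  qed
  have w2: "w^2 = 1 + v" unfolding w_def using vp by simp
  have wsg: "w \<ge> sg" unfolding w_def sg_def by (rule real_sqrt_le_mono) linarith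
  have wXw: "wX \<ge> w" unfolding wX_def w_def using Xv by (intro real_sqrt_le_mono) linarith
  have wpos: "w \<ge> 0" unfolding w_def using vp by simp
  have a_eq: "a = sqrt 3 * sg" unfolding a_def sg_def v_def by (simp add: real_sqrt_mult)
  have s3: "sqrt 3 \<le> (7/4::real)"
  proof -
    have "sqrt 3 \<le> sqrt ((7/4)^2::real)" by (rule real_sqrt_le_mono) (simp add: power2_eq_square)
    thus ?thesis by simp
  qed
  have a_le: "a \<le> 7/4 * sg" unfolding a_eq using s3 sgp by (intro mult_right_mono) auto
  have ap: "a \<ge> 0" unfolding a_def using vp v_def by simp
  have E_le: "E \<le> 8/9"
  proof -
    have "1 + 1/8 \<le> exp (1/8::real)" by (rule exp_ge_add_one_self)
    hence "exp (-1/8::real) = 1 / exp (1/8)" by (simp add: exp_minus field_simps)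
    moreover have "1 / exp (1/8::real) \<le> 1 / (1 + 1/8)"
      using \<open>1 + 1/8 \<le> exp (1/8::real)\<close> by (intro divide_left_mono) auto
    ultimately show ?thesis unfolding E_def by simp
  qed
  have Ep: "E > 0" unfolding E_def by simp
  have Req: "?R = E / (4 * sqrt 2) * sqrt s2 * (sg / (1 + wX))"
    unfolding E_def s2_def sg_def v_def wX_def X_def var_eq by simp
  have Rnn: "?R \<ge> 0" unfolding Req using Ep s2lo wXw wpos sgp by simp
  have R2: "?R^2 = E^2 / 32 * s2 * v / (1 + wX)^2"
  proof -
    from Req have "?R^2 = E^2 / (16 * (sqrt 2)^2) * (sqrt s2)^2 * (sg^2 / (1 + wX)^2)"
      by (simp add: power_mult_distrib power_divide)
    also have "\<dots> = E^2 / 32 * s2 * v / (1 + wX)^2"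
      using s2lo sg2 by simp
    finally show ?thesis .
  qed
  have R2le: "?R^2 \<le> 2/81 * s2 * v / (1 + w)^2"
  proof -
    have "E^2 \<le> (8/9)^2" using E_le Ep by (intro power_mono) auto
    hence "E^2 / 32 \<le> 2/81" by (simp add: power2_eq_square)
    hence "E^2 / 32 * (s2 * v) \<le> 2/81 * (s2 * v)" using s2lo vp by (intro mult_right_mono) auto
    moreover have "(1 + w)^2 \<le> (1 + wX)^2" using wXw wpos by (intro power_mono) auto
    moreover have "(1 + w)^2 > 0" using wpos by simp
    ultimately have "E^2 / 32 * (s2 * v) / (1 + wX)^2 \<le> 2/81 * (s2 * v) / (1 + w)^2"
      using s2lo vp Ep by (intro frac_le) auto
    thus ?thesis unfolding R2 by (simp add: mult.assoc)
  qed
  have Mlo: "M \<ge> (2/3) / (2 * a + 1)"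
  proof -
    have c: "M * (2 * a + 1) \<ge> 2/3" using cheb unfolding a_def .
    have "2 * a + 1 > 0" using ap by simp
    thus ?thesis using c by (simp add: pos_divide_le_eq algebra_simps)
  qed
  have Mn: "M \<ge> 0" using p_le_M[of 0] p_nonneg[of 0] by simp
  have tp: "tau > 0" by (rule tau_pos)
  have "(2/3 / (2 * a + 1))^2 \<le> M^2" using Mlo ap by (intro power_mono) auto
  hence P2: "P^2 \<ge> tau^2 * (4/9 / (2 * a + 1)^2) / (tau + 6/5)"
  proof -
    assume h: "(2/3 / (2 * a + 1))^2 \<le> M^2"
    have eqq: "(2/3 / (2 * a + 1))^2 = 4/9 / (2 * a + 1)^2" by (simp add: power_divide power2_eq_square algebra_simps)
    have "tau^2 * (4/9 / (2 * a + 1)^2) \<le> tau^2 * M^2"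
      using h unfolding eqq by (intro mult_left_mono) auto
    hence "tau^2 * (4/9 / (2 * a + 1)^2) / (tau + 6/5) \<le> tau^2 * M^2 / (tau + 6/5)"
      using tp by (intro divide_right_mono) auto
    thus ?thesis using PM by linarith
  qed
  have core: "(2 * a + 1)^2 * (s2 * v + 6/5) \<le> 18 * s2 * v * (1 + w)^2"
  proof -
    have "(2 * a + 1)^2 \<le> (7/2 * sg + 1)^2" using a_le ap by (intro power_mono) auto
    moreover have "s2 * v + 6/5 \<le> sg^2 + 6/5" using s2hi vp sg2 by (simp add: mult_left_le_one_le)
    ultimately have L: "(2 * a + 1)^2 * (s2 * v + 6/5) \<le> (7/2 * sg + 1)^2 * (sg^2 + 6/5)"
      using vp s2lo by (intro mult_mono) auto
    have "(1 + w)^2 = 2 + sg^2 + 2 * w" using w2 sg2 by (simp add: power2_eq_square algebra_simps)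
    hence W: "(1 + w)^2 \<ge> sg^2 + 2 * sg + 2" using wsg by simp
    have "72/5 * sg^2 \<le> 18 * s2 * v" using s2lo sg2 vp by simp
    hence "72/5 * sg^2 * (sg^2 + 2 * sg + 2) \<le> 18 * s2 * v * (1 + w)^2"
      using W sgp s2lo sg2 vp by (intro mult_mono) auto
    thus ?thesis using L poly[OF sgp] by linarith
  qed
  have "?R^2 \<le> P^2"
  proof -
    have d1: "(2 * a + 1)^2 > 0" using ap by simp
    have d2: "(1 + w)^2 > 0" using wpos by simp
    have d3: "s2 * v + 6/5 > 0" using s2lo vp by (metis add_pos_pos mult_pos_pos divide_pos_pos zero_less_numeral order_less_le_trans[of 0 "4/5" s2] zero_less_divide_iff)
    define A where "A = (2 * a + 1)^2"
    define B where "B = (1 + w)^2"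
    define C where "C = s2 * v + 6/5"
    define t where "t = s2 * v"
    have tp: "t > 0" unfolding t_def using s2lo vp by simp
    have Ap: "A > 0" and Bp: "B > 0" and Cp: "C > 0" using d1 d2 d3 unfolding A_def B_def C_def by auto
    have cr: "A * C \<le> 18 * t * B" using core unfolding A_def B_def C_def t_def by (simp add: mult.assoc)
    have "2/81 * t / B = (2/81 * t * (A * C)) / (B * (A * C))" using Ap Bp Cp by (simp add: field_simps)
    also have "\<dots> \<le> (2/81 * t * (18 * t * B)) / (B * (A * C))"
      using cr tp Ap Bp Cp by (intro divide_right_mono mult_left_mono) auto
    also have "\<dots> = t^2 * (4/9 / A) / C" using Ap Bp Cp by (simp add: field_simps power2_eq_square)
    finally have "2/81 * t / B \<le> t^2 * (4/9 / A) / C" .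
    hence "2/81 * s2 * v / (1 + w)^2 \<le> (s2 * v)^2 * (4/9 / (2 * a + 1)^2) / (s2 * v + 6/5)"
      unfolding A_def B_def C_def t_def by (simp add: mult.assoc)
    thus ?thesis using R2le P2 tau_s by simp
  qed
  thus ?thesis using P_nonneg by (rule power2_le_imp_le)
qed

end

theorem theorem2:
  fixes n i k :: nat
  assumes "n \<ge> 1" and "1 \<le> i" and "i \<le> n" and "1 \<le> k" and "k \<le> n"
    and "1 \<le> hyp_mean n i k"
    and "hyp_mean n i k \<le> real (min i k) - 2"
    and "(real n - real i) * (real n - real k) / real n > 1"
  shows "hyp_prob n i k (\<lambda>j. real j \<ge> hyp_mean n i k)
     \<ge> exp (-1/8) / (4 * sqrt 2) * sqrt ((real n - 1) / real n)
        * (sqrt (hyp_var n i k)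
           / (1 + sqrt (1 + (real n - 1) / (real n - real k) * hyp_var n i k)))"
proof -
  interpret H: hyp n i k using assms by unfold_locales
  show ?thesis using H.final H.prob_eq unfolding H.P_def by simp
qed

end
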